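(* Let $G$ be a finite simple graph with vertices $v_1,\dots,v_n$ ($n\ge 1$) in which no vertex is adjacent to all other vertices, let $d\ge 1$ be an integer, let $G'$ be the graph constructed from $(G,d)$ as described in the context, and let $h=n(n+1)+d$. Suppose $S_1,\dots,S_h$ are pairwise disjoint vertex sets of $G'$, each inducing a connected subgraph, such that for all $i\ne j$ some edge of $G'$ joins a vertex of $S_i$ to a vertex of $S_j$. If $S_i$ contains a top vertex, then $D_i=\{v_j : m_j\in S_i\}$ is a dominating set of $G$.
   Context: A dominating set of $G$ is a set $D$ of vertices such that every vertex of $G$ either lies in $D$ or is adjacent to a vertex of $D$. Construction of $G'$ from a graph $G$ with vertices $v_1,\dots,v_n$ and an integer $d$: say $v_i$ dominates $v_j$ if $v_i=v_j$ or $v_iv_j$ is an edge of $G$. The vertex set of $G'$ consists of top vertices $t_1,\dots,t_d$, middle vertices $m_1,\dots,m_n$, and bottom vertices $b_{j,k}$ for $1\le j\le n$, $1\le k\le n+1$. Edges: the top vertices form a clique; the middle vertices form an independent set; the bottom vertices form a clique (of size $n(n+1)$); every top vertex is adjacent to every middle vertex; there are no top–bottom edges; middle vertex $m_i$ is adjacent to bottom vertex $b_{j,k}$ if and only if $v_i$ dominates $v_j$ in $G$. *)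

theory Defs
  imports Main
begin

text \<open>The graph G has vertex set {1..n} and a symmetric irreflexive adjacency
relation E (edges only between vertices of {1..n}).\<close>

definition dominates :: "(nat \<Rightarrow> nat \<Rightarrow> bool) \<Rightarrow> nat \<Rightarrow> nat \<Rightarrow> bool" where
  "dominates E i j \<longleftrightarrow> i = j \<or> E i j"

definition dominating_set :: "nat \<Rightarrow> (nat \<Rightarrow> nat \<Rightarrow> bool) \<Rightarrow> nat set \<Rightarrow> bool" where
  "dominating_set n E D \<longleftrightarrow> D \<subseteq> {1..n} \<and> (\<forall>v\<in>{1..n}. v \<in> D \<or> (\<exists>u\<in>D. E u v))"

datatype gvert = Top nat | Mid nat | Bot nat nat

definition gp_verts :: "nat \<Rightarrow> nat \<Rightarrow> gvert set" where
  "gp_verts n d = Top ` {1..d} \<union> Mid ` {1..n} \<union>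
     {Bot j k | j k. j \<in> {1..n} \<and> k \<in> {1..n+1}}"

fun gp_adj0 :: "(nat \<Rightarrow> nat \<Rightarrow> bool) \<Rightarrow> gvert \<Rightarrow> gvert \<Rightarrow> bool" where
  "gp_adj0 E (Top a) (Top b) = (a \<noteq> b)"
| "gp_adj0 E (Top a) (Mid i) = True"
| "gp_adj0 E (Mid i) (Top a) = True"
| "gp_adj0 E (Mid i) (Mid j) = False"
| "gp_adj0 E (Mid i) (Bot j k) = dominates E i j"
| "gp_adj0 E (Bot j k) (Mid i) = dominates E i j"
| "gp_adj0 E (Bot j k) (Bot j' k') = ((j, k) \<noteq> (j', k'))"
| "gp_adj0 E (Top a) (Bot j k) = False"
| "gp_adj0 E (Bot j k) (Top a) = False"

definition gp_adj :: "nat \<Rightarrow> nat \<Rightarrow> (nat \<Rightarrow> nat \<Rightarrow> bool) \<Rightarrow> gvert \<Rightarrow> gvert \<Rightarrow> bool" where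
  "gp_adj n d E x y \<longleftrightarrow> x \<in> gp_verts n d \<and> y \<in> gp_verts n d \<and> gp_adj0 E x y"

definition induces_connected :: "('a \<Rightarrow> 'a \<Rightarrow> bool) \<Rightarrow> 'a set \<Rightarrow> bool" where
  "induces_connected A S \<longleftrightarrow> S \<noteq> {} \<and>
     (\<forall>x\<in>S. \<forall>y\<in>S. (\<lambda>a b. a \<in> S \<and> b \<in> S \<and> A a b)\<^sup>*\<^sup>* x y)"

end

theory Submission
  imports Defs
begin

lemma count_lemma:
  assumes "finite A" "W \<subseteq> A" "finite L"
    and disj: "\<forall>l\<in>L. \<forall>l'\<in>L. l \<noteq> l' \<longrightarrow> S l \<inter> S l' = {}"
    and ne: "\<forall>l\<in>L. (S l \<inter> A) - W \<noteq> {}"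
  shows "card L + card W \<le> card A"
proof -
  from ne have "\<forall>l\<in>L. \<exists>x. x \<in> (S l \<inter> A) - W" by blast
  from bchoice[OF this] obtain r where r: "\<forall>l\<in>L. r l \<in> (S l \<inter> A) - W"
    by blast
  have inj: "inj_on r L"
  proof (rule inj_onI)
    fix x y assume "x \<in> L" "y \<in> L" "r x = r y"
    then have "r x \<in> S x" "r x \<in> S y" using r by auto
    then have "S x \<inter> S y \<noteq> {}" by blast
    then show "x = y" using disj \<open>x \<in> L\<close> \<open>y \<in> L\<close> by blast
  qed
  have sub: "r ` L \<subseteq> A - W" using r by blast
  have "card L = card (r ` L)" using inj by (simp add: card_image)
  also have "\<dots> \<le> card (A - W)" using sub assms(1) by (simp add: card_mono)
  also have "\<dots> = card A - card W" using assms(1,2) by (simp add: card_Diff_subset finite_subset)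
  finally have "card L \<le> card A - card W" .
  moreover have "card W \<le> card A" using assms(1,2) by (rule card_mono)
  ultimately show ?thesis by linarith
qed

lemma bots_eq: "{Bot j k | j k. j \<in> X \<and> k \<in> Y} = (\<lambda>(j,k). Bot j k) ` (X \<times> Y)"
  by auto

lemma card_V: "finite (gp_verts n d) \<and> card (gp_verts n d) \<le> d + n + n * (n + 1)"
proof -
  have f: "finite ((\<lambda>(j,k). Bot j k) ` ({1..n} \<times> {1..n+1}))" by simp
  have c: "card ((\<lambda>(j,k). Bot j k) ` ({1..n} \<times> {1..n+1})) \<le> n * (n+1)"
    using card_image_le[of "{1..n} \<times> {1..n+1}" "(\<lambda>(j,k). Bot j k)"] by (simp add: card_cartesian_product)
  have c1: "card (Top ` {1..d}) \<le> d" using card_image_le[of "{1..d}" Top] by simp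
  have c2: "card (Mid ` {1..n}) \<le> n" using card_image_le[of "{1..n}" Mid] by simp
  have "card (gp_verts n d) \<le> card (Top ` {1..d}) + card (Mid ` {1..n}) + card ((\<lambda>(j,k). Bot j k) ` ({1..n} \<times> {1..n+1}))"
  proof -
    have "card (gp_verts n d) \<le> card (Top ` {1..d} \<union> Mid ` {1..n}) + card ((\<lambda>(j,k). Bot j k) ` ({1..n} \<times> {1..n+1}))"
      unfolding gp_verts_def bots_eq by (rule card_Un_le)
    moreover have "card (Top ` {1..d} \<union> Mid ` {1..n}) \<le> card (Top ` {1..d}) + card (Mid ` {1..n})"
      by (rule card_Un_le)
    ultimately show ?thesis by linarith
  qed
  moreover have "finite (gp_verts n d)" unfolding gp_verts_def bots_eq using f by blast
  ultimately show ?thesis using c c1 c2 by linarith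
qed

lemma adj0: "gp_adj n d E x y \<Longrightarrow> gp_adj0 E x y \<and> x \<in> gp_verts n d \<and> y \<in> gp_verts n d"
  by (simp add: gp_adj_def)

lemma nonmid:
  assumes "induces_connected (gp_adj n d E) P" "\<forall>u. P \<noteq> {Mid u}"
  shows "\<exists>x\<in>P. \<forall>u. x \<noteq> Mid u"
proof (rule ccontr)
  assume H: "\<not> ?thesis"
  from assms(1) obtain x where x: "x \<in> P" unfolding induces_connected_def by blast
  with H obtain u where xu: "x = Mid u" by blast
  have "P \<noteq> {x}" using assms(2) xu by blast
  then obtain y where y: "y \<in> P" "y \<noteq> x" using x by blast
  have "\<forall>x\<in>P. \<forall>y\<in>P. (\<lambda>a b. a \<in> P \<and> b \<in> P \<and> gp_adj n d E a b)\<^sup>*\<^sup>* x y"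
    using assms(1) unfolding induces_connected_def by (rule conjunct2)
  then have "(\<lambda>a b. a \<in> P \<and> b \<in> P \<and> gp_adj n d E a b)\<^sup>*\<^sup>* x y"
    using x y by blast
  then have "\<exists>z. z \<in> P \<and> gp_adj n d E x z"
    using y(2) by (induction rule: converse_rtranclp_induct) auto
  then obtain z where "z \<in> P" "gp_adj n d E x z" by blast
  moreover obtain v where "z = Mid v" using H \<open>z \<in> P\<close> by blast
  ultimately show False using xu adj0[of n d E x z] by simp
qed

theorem lemma5:
  fixes n d h :: nat and E :: "nat \<Rightarrow> nat \<Rightarrow> bool" and S :: "nat \<Rightarrow> gvert set" and i :: nat
  assumes n_pos: "n \<ge> 1" and d_pos: "d \<ge> 1"
    and E_sym: "\<forall>u v. E u v \<longrightarrow> E v u"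
    and E_irrefl: "\<forall>u. \<not> E u u"
    and E_verts: "\<forall>u v. E u v \<longrightarrow> u \<in> {1..n} \<and> v \<in> {1..n}"
    and no_universal: "\<forall>v\<in>{1..n}. \<exists>u\<in>{1..n}. u \<noteq> v \<and> \<not> E v u"
    and h_def: "h = n * (n + 1) + d"
    and S_sub: "\<forall>j\<in>{1..h}. S j \<subseteq> gp_verts n d"
    and S_disj: "\<forall>j\<in>{1..h}. \<forall>l\<in>{1..h}. j \<noteq> l \<longrightarrow> S j \<inter> S l = {}"
    and S_conn: "\<forall>j\<in>{1..h}. induces_connected (gp_adj n d E) (S j)"
    and S_touch: "\<forall>j\<in>{1..h}. \<forall>l\<in>{1..h}. j \<noteq> l \<longrightarrow>
                    (\<exists>x\<in>S j. \<exists>y\<in>S l. gp_adj n d E x y)"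
    and i_range: "i \<in> {1..h}"
    and top_in: "\<exists>a. Top a \<in> S i"
  shows "dominating_set n E {j. Mid j \<in> S i}"
proof -
  define V where "V = gp_verts n d"
  define L where "L = {1..h} - {i}"
  have finV: "finite V" and cV: "card V \<le> h + n" using card_V[of n d] h_def unfolding V_def by auto
  have finL: "finite L" unfolding L_def by simp
  have cL: "card L = h - 1" unfolding L_def using i_range by simp
  have Lsub: "L \<subseteq> {1..h}" "i \<notin> L" unfolding L_def by auto
  have disjL: "\<forall>l\<in>L. \<forall>l'\<in>L. l \<noteq> l' \<longrightarrow> S l \<inter> S l' = {}" using S_disj Lsub by blast
  have Si: "S i \<subseteq> V" using S_sub i_range V_def by blast
  have finSi: "finite (S i)" using Si finV finite_subset by blast
  have cVSi: "card (V - S i) + card (S i) = card V"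
  proof -
    have "card (V - S i) = card V - card (S i)" by (rule card_Diff_subset[OF finSi Si])
    moreover have "card (S i) \<le> card V" using finV Si by (rule card_mono)
    ultimately show ?thesis by linarith
  qed
  obtain a where a: "Top a \<in> S i" using top_in by blast
  have hpos: "h \<ge> 1" using i_range by simp
  have Sl: "\<And>l. l \<in> L \<Longrightarrow> S l \<subseteq> V \<and> S l \<inter> S i = {}"
  proof -
    fix l assume l: "l \<in> L"
    then have "l \<in> {1..h}" "l \<noteq> i" unfolding L_def by auto
    then show "S l \<subseteq> V \<and> S l \<inter> S i = {}" using S_sub S_disj i_range unfolding V_def by auto
  qed
  have touch: "\<And>l. l \<in> L \<Longrightarrow> \<exists>x\<in>S l. \<exists>y\<in>S i. gp_adj0 E x y \<and> x \<in> V"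
  proof -
    fix l assume l: "l \<in> L"
    then have "l \<in> {1..h}" "l \<noteq> i" unfolding L_def by auto
    then obtain x y where "x \<in> S l" "y \<in> S i" "gp_adj n d E x y" using S_touch i_range by meson
    then show "\<exists>x\<in>S l. \<exists>y\<in>S i. gp_adj0 E x y \<and> x \<in> V" using adj0 unfolding V_def by blast
  qed
  show ?thesis
  proof (rule ccontr)
    assume notdom: "\<not> ?thesis"
    have Dsub: "{j. Mid j \<in> S i} \<subseteq> {1..n}" using Si unfolding V_def gp_verts_def by auto
    then obtain j0 where j0: "j0 \<in> {1..n}" "\<not> (\<exists>u. Mid u \<in> S i \<and> dominates E u j0)"
      using notdom unfolding dominating_set_def dominates_def by blast
    show False
    proof (cases "\<exists>b1 b2. Bot b1 b2 \<in> S i")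
      case False
      define Dom where "Dom = {j \<in> {1..n}. \<exists>u. Mid u \<in> S i \<and> dominates E u j}"
      define A where "A = Top ` ({1..d} - {a}) \<union> Mid ` {1..n} \<union> (\<lambda>(j,k). Bot j k) ` (Dom \<times> {1..n+1})"
      have finA: "finite A" unfolding A_def Dom_def by simp
      have aV: "a \<in> {1..d}" using a Si unfolding V_def gp_verts_def by auto
      have cDom: "card Dom \<le> n - 1"
      proof -
        have "Dom \<subseteq> {1..n} - {j0}" using j0 unfolding Dom_def by auto
        then have "card Dom \<le> card ({1..n} - {j0})" by (simp add: card_mono)
        then show ?thesis using j0 by simp
      qed
      have cA: "card A \<le> (d - 1) + n + (n - 1) * (n + 1)"
      proof -
        have c1: "card (Top ` ({1..d} - {a})) \<le> d - 1"
          using card_image_le[of "{1..d} - {a}" Top] aV by simp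
        have c2: "card (Mid ` {1..n}) \<le> n" using card_image_le[of "{1..n}" Mid] by simp
        have c3: "card ((\<lambda>(j,k). Bot j k) ` (Dom \<times> {1..n+1})) \<le> (n - 1) * (n + 1)"
        proof -
          have "card ((\<lambda>(j,k). Bot j k) ` (Dom \<times> {1..n+1})) \<le> card Dom * (n+1)"
            using card_image_le[of "Dom \<times> {1..n+1}" "(\<lambda>(j,k). Bot j k)"]
            by (simp add: card_cartesian_product Dom_def)
          also have "\<dots> \<le> (n - 1) * (n + 1)" using cDom by (rule mult_right_mono) simp
          finally show ?thesis .
        qed
        have "card A \<le> card (Top ` ({1..d} - {a})) + card (Mid ` {1..n}) + card ((\<lambda>(j,k). Bot j k) ` (Dom \<times> {1..n+1}))"
          unfolding A_def by (meson add_le_mono card_Un_le le_refl order_trans)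
        then show ?thesis using c1 c2 c3 by linarith
      qed
      have ne: "\<forall>l\<in>L. (S l \<inter> A) - {} \<noteq> {}"
      proof
        fix l assume l: "l \<in> L"
        obtain x y where xy: "x \<in> S l" "y \<in> S i" "gp_adj0 E x y" "x \<in> V" using touch[OF l] by blast
        show "(S l \<inter> A) - {} \<noteq> {}"
        proof (cases x)
          case (Top t)
          have "t \<noteq> a" using xy a Sl[OF l] Top by blast
          then have "x \<in> A" using xy(4) Top unfolding A_def V_def gp_verts_def by auto
          then show ?thesis using xy by blast
        next
          case (Mid t)
          then have "x \<in> A" using xy(4) unfolding A_def V_def gp_verts_def by auto
          then show ?thesis using xy by blast
        next
          case (Bot j k)
          obtain u where u: "y = Mid u" using xy(2,3) False Bot by (cases y) auto
          have "dominates E u j" using xy(3) Bot u by simp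
          moreover have "j \<in> {1..n}" "k \<in> {1..n+1}" using xy(4) Bot unfolding V_def gp_verts_def by auto
          ultimately have "x \<in> A" using Bot u xy(2) unfolding A_def Dom_def by force
          then show ?thesis using xy by blast
        qed
      qed
      have "card L + card ({}::gvert set) \<le> card A"
        using count_lemma[OF finA _ finL disjL ne] by simp
      then have "h - 1 \<le> (d - 1) + n + (n - 1) * (n + 1)" using cL cA by simp
      moreover obtain m where "n = Suc m" using n_pos by (cases n) auto
      ultimately show False using h_def d_pos by (simp add: algebra_simps)
    next
      case True
      then obtain b1 b2 where bb: "Bot b1 b2 \<in> S i" by blast
      have sing: "\<exists>y\<in>L. \<exists>u. S y = {Mid u}"
      proof (rule ccontr)
        assume ns: "\<not> ?thesis"
        define W where "W = Mid ` {1..n} - S i"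
        have WA: "W \<subseteq> V - S i" unfolding W_def V_def gp_verts_def by auto
        have ne: "\<forall>l\<in>L. (S l \<inter> (V - S i)) - W \<noteq> {}"
        proof
          fix l assume l: "l \<in> L"
          have "induces_connected (gp_adj n d E) (S l)" using S_conn Lsub l by blast
          then obtain x where "x \<in> S l" "\<forall>u. x \<noteq> Mid u" using nonmid ns l by blast
          then show "(S l \<inter> (V - S i)) - W \<noteq> {}" using Sl[OF l] unfolding W_def by blast
        qed
        have c: "card L + card W \<le> card (V - S i)"
          using count_lemma[OF _ WA finL disjL ne] finV by simp
        define cM where "cM = card (Mid ` {1..n} \<inter> S i)"
        have cW: "card W + cM = n"
        proof -
          have "card (Mid ` {1..n}) = n" by (simp add: card_image inj_on_def)
          moreover have "card W = card (Mid ` {1..n}) - cM" unfolding W_def cM_def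
            by (metis Diff_Int2 Diff_Int_distrib2 card_Diff_subset_Int finite_Int finite_imageI finite_atLeastAtMost inf.idem)
          moreover have "cM \<le> card (Mid ` {1..n})" unfolding cM_def by (simp add: card_mono)
          ultimately show ?thesis by simp
        qed
        have cS: "cM + 2 \<le> card (S i)"
        proof -
          have "insert (Top a) (insert (Bot b1 b2) (Mid ` {1..n} \<inter> S i)) \<subseteq> S i" using a bb by blast
          then have "card (insert (Top a) (insert (Bot b1 b2) (Mid ` {1..n} \<inter> S i))) \<le> card (S i)"
            using finSi by (simp add: card_mono)
          moreover have "card (insert (Top a) (insert (Bot b1 b2) (Mid ` {1..n} \<inter> S i))) = cM + 2"
            unfolding cM_def by (auto simp: image_iff)
          ultimately show ?thesis by simp
        qed
        show False using c cW cS cVSi cV cL hpos by linarith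
      qed
      then obtain y u where y: "y \<in> L" "S y = {Mid u}" by blast
      have "Mid u \<in> V" using Sl[OF y(1)] y(2) by auto
      then have uV: "u \<in> {1..n}" unfolding V_def gp_verts_def by auto
      from no_universal[rule_format, OF uV] obtain w where w: "w \<in> {1..n}" "w \<noteq> u" "\<not> E u w" by blast
      have ndom: "\<not> dominates E u w" using w unfolding dominates_def by auto
      define Bw where "Bw = Bot w ` {1..n+1}"
      define W where "W = Bw - S i"
      have WA: "W \<subseteq> V - S i" using w unfolding W_def Bw_def V_def gp_verts_def by auto
      have ne: "\<forall>l\<in>L. (S l \<inter> (V - S i)) - W \<noteq> {}"
      proof
        fix l assume l: "l \<in> L"
        show "(S l \<inter> (V - S i)) - W \<noteq> {}"
        proof (cases "l = y")
          case True
          then show ?thesis using y Sl[OF l] unfolding W_def Bw_def by auto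
        next
          case False
          obtain x z where xz: "x \<in> S l" "z \<in> S y" "gp_adj n d E x z"
            using S_touch Lsub l y False by blast
          have "z = Mid u" using xz y by simp
          then have "x \<notin> Bw" using xz(3) ndom adj0[of n d E x z] unfolding Bw_def by auto
          then show ?thesis using xz(1) Sl[OF l] unfolding W_def by blast
        qed
      qed
      have c: "card L + card W \<le> card (V - S i)"
        using count_lemma[OF _ WA finL disjL ne] finV by simp
      define cB where "cB = card (Bw \<inter> S i)"
      have cW: "card W + cB = n + 1"
      proof -
        have "card Bw = n + 1" unfolding Bw_def by (simp add: card_image inj_on_def)
        moreover have "card W = card Bw - cB" unfolding W_def cB_def
          by (metis Diff_Int2 Diff_Int_distrib2 card_Diff_subset_Int finite_Int finite_imageI finite_atLeastAtMost inf.idem Bw_def)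
        moreover have "cB \<le> card Bw" unfolding cB_def Bw_def by (simp add: card_mono)
        ultimately show ?thesis by simp
      qed
      have cS: "cB + 1 \<le> card (S i)"
      proof -
        have "insert (Top a) (Bw \<inter> S i) \<subseteq> S i" using a by blast
        then have "card (insert (Top a) (Bw \<inter> S i)) \<le> card (S i)"
          using finSi by (simp add: card_mono)
        moreover have "card (insert (Top a) (Bw \<inter> S i)) = cB + 1"
          unfolding cB_def Bw_def using finSi by (auto simp: image_iff)
        ultimately show ?thesis by simp
      qed
      show False using c cW cS cVSi cV cL hpos by linarith
    qed
  qed
qed

end
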